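(* Let $n\ge5$, let $\Delta$ be a non-singular $(d-1)$-complex on $[n-1]$ with $1\le d\le n-4$, and let $\Delta'$ be any complex on $[n-1]$ (of any dimension). Then $D_\Delta=D_{\Delta'}$ in $\operatorname{Pic}(\overline{\mathcal M}_{0,n})$ if and only if $\Delta'=\Delta$.
   Context: $\operatorname{Pic}(\overline{\mathcal M}_{0,n})=\mathbb ZH\oplus\bigoplus_I\mathbb ZE_I$ (sum over $I\subseteq[n-1]$, $1\le|I|\le n-4$) via a fixed Kapranov blow-up presentation $\overline{\mathcal M}_{0,n}\cong\operatorname{Bl}\mathbb P^{n-3}$; $H$ is the hyperplane class and $E_I$ the exceptional divisors. A $k$-simplex on $[n-1]$ is a multiset of cardinality $k+1$ with entries in $[n-1]$, a $k$-complex is a finite set of distinct $k$-simplices; a simplex is singular if some entry has multiplicity $\ge2$, and a complex is non-singular if none of its simplices is singular. For a $k$-complex $\Delta$ put $D_\Delta=(k+1)H-\sum_I\big(k+1-\max_{\sigma\in\Delta}\sum_{i\in I}\operatorname{mult}_i(\sigma)\big)E_I$, where $\operatorname{mult}_i(\sigma)$ is the multiplicity of $i$ in $\sigma$. *)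

theory Defs
  imports Main "HOL-Library.Multiset"
begin

definition simplex :: "nat \<Rightarrow> nat \<Rightarrow> nat multiset \<Rightarrow> bool" where
  "simplex n k \<sigma> \<longleftrightarrow> size \<sigma> = k + 1 \<and> set_mset \<sigma> \<subseteq> {1..n-1}"

definition complex :: "nat \<Rightarrow> nat \<Rightarrow> nat multiset set \<Rightarrow> bool" where
  "complex n k \<Delta> \<longleftrightarrow> finite \<Delta> \<and> \<Delta> \<noteq> {} \<and> (\<forall>\<sigma>\<in>\<Delta>. simplex n k \<sigma>)"

definition singular_simplex :: "nat multiset \<Rightarrow> bool" where
  "singular_simplex \<sigma> \<longleftrightarrow> (\<exists>i. count \<sigma> i \<ge> 2)"

definition nonsingular :: "nat multiset set \<Rightarrow> bool" where
  "nonsingular \<Delta> \<longleftrightarrow> (\<forall>\<sigma>\<in>\<Delta>. \<not> singular_simplex \<sigma>)"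

text \<open>Index sets of the exceptional divisors E_I: I \<subseteq> [n-1], 1 \<le> |I| \<le> n-4.\<close>
definition exc_index :: "nat \<Rightarrow> nat set \<Rightarrow> bool" where
  "exc_index n I \<longleftrightarrow> I \<subseteq> {1..n-1} \<and> 1 \<le> card I \<and> card I \<le> n - 4"

text \<open>Elements of Pic(M_{0,n}) = Z H \<oplus> \<Oplus>_I Z E_I, represented by their coordinates:
  (coefficient of H, I \<mapsto> coefficient of E_I), with E-coordinates 0 outside the valid
  index sets, so equality of representatives is equality in Pic.\<close>
type_synonym pic = "int \<times> (nat set \<Rightarrow> int)"

definition D :: "nat \<Rightarrow> nat \<Rightarrow> nat multiset set \<Rightarrow> pic" where
  "D n k \<Delta> =
     (int (k + 1),
      \<lambda>I. if exc_index n I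
           then - (int (k + 1) - int (Max ((\<lambda>\<sigma>. \<Sum>i\<in>I. count \<sigma> i) ` \<Delta>)))
           else 0)"

end

theory Submission
  imports Defs
begin

abbreviation MM :: "nat multiset set \<Rightarrow> nat set \<Rightarrow> nat" where
  "MM A I \<equiv> Max ((\<lambda>\<sigma>. \<Sum>i\<in>I. count \<sigma> i) ` A)"

lemma sum_count_restrict:
  assumes "finite I"
  shows "(\<Sum>i\<in>I. count \<sigma> i) = (\<Sum>i\<in>I \<inter> set_mset \<sigma>. count \<sigma> i)"
  using assms by (intro sum.mono_neutral_right) auto

lemma sum_count_le:
  assumes "finite I"
  shows "(\<Sum>i\<in>I. count \<sigma> i) \<le> size \<sigma>"
proof -
  have "(\<Sum>i\<in>I \<inter> set_mset \<sigma>. count \<sigma> i) \<le> (\<Sum>i\<in>set_mset \<sigma>. count \<sigma> i)"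
    by (intro sum_mono2) auto
  then show ?thesis using sum_count_restrict[OF assms] size_multiset_overloaded_eq by metis
qed

lemma sum_count_eq:
  assumes "finite I" "(\<Sum>i\<in>I. count \<sigma> i) = size \<sigma>"
  shows "set_mset \<sigma> \<subseteq> I"
proof
  fix x assume x: "x \<in> set_mset \<sigma>"
  show "x \<in> I"
  proof (rule ccontr)
    assume "x \<notin> I"
    have "(\<Sum>i\<in>I \<inter> set_mset \<sigma>. count \<sigma> i) \<le> (\<Sum>i\<in>set_mset \<sigma> - {x}. count \<sigma> i)"
      using \<open>x \<notin> I\<close> by (intro sum_mono2) auto
    moreover have "(\<Sum>i\<in>set_mset \<sigma>. count \<sigma> i) = count \<sigma> x + (\<Sum>i\<in>set_mset \<sigma> - {x}. count \<sigma> i)"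
      using x by (simp add: sum.remove)
    moreover have "count \<sigma> x > 0" using x by simp
    ultimately show False
      using assms sum_count_restrict[OF assms(1), of \<sigma>] size_multiset_overloaded_eq[of \<sigma>] by linarith
  qed
qed

lemma ns_mset_set:
  assumes "\<not> singular_simplex \<sigma>"
  shows "\<sigma> = mset_set (set_mset \<sigma>)"
proof (rule multiset_eqI)
  fix x
  have "\<not> count \<sigma> x \<ge> 2" using assms unfolding singular_simplex_def by blast
  hence "count \<sigma> x \<le> 1" by linarith
  then show "count \<sigma> x = count (mset_set (set_mset \<sigma>)) x"
  proof (cases "x \<in># \<sigma>")
    case True
    hence "count \<sigma> x > 0" by simp
    with \<open>count \<sigma> x \<le> 1\<close> have "count \<sigma> x = 1" by linarith
    with True show ?thesis by (simp add: count_mset_set)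
  next
    case False
    thus ?thesis by (simp add: count_mset_set not_in_iff)
  qed
qed

lemma ns_card:
  assumes "\<not> singular_simplex \<sigma>"
  shows "card (set_mset \<sigma>) = size \<sigma>"
  using ns_mset_set[OF assms] by (metis finite_set_mset size_mset_set)

lemma incl:
  assumes A: "complex n k A" and B: "complex n k B" and nA: "nonsingular A" and nB: "nonsingular B"
    and kn: "k + 1 \<le> n - 4"
    and hM: "\<forall>I. exc_index n I \<longrightarrow> MM A I = MM B I"
  shows "A \<subseteq> B"
proof
  fix \<sigma> assume s: "\<sigma> \<in> A"
  define I where "I = set_mset \<sigma>"
  have ss: "simplex n k \<sigma>" using A s unfolding complex_def by auto
  have ns: "\<not> singular_simplex \<sigma>" using nA s unfolding nonsingular_def by auto
  have cI: "card I = k + 1" using ns_card[OF ns] ss unfolding simplex_def I_def by simp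
  have fI: "finite I" unfolding I_def by simp
  have ex: "exc_index n I" using ss cI kn unfolding exc_index_def simplex_def I_def by auto
  have fA: "finite A" "A \<noteq> {}" and fB: "finite B" "B \<noteq> {}" using A B unfolding complex_def by auto
  have "(\<Sum>i\<in>I. count \<sigma> i) = k + 1"
    using size_multiset_overloaded_eq[of \<sigma>] ss unfolding I_def simplex_def by simp
  moreover have "(\<Sum>i\<in>I. count \<sigma> i) \<le> MM A I"
    by (rule Max_ge) (use s fA in auto)
  ultimately have "MM A I \<ge> k + 1" by simp
  hence ge: "MM B I \<ge> k + 1" using hM ex by simp
  obtain \<tau> where t: "\<tau> \<in> B" and tm: "(\<Sum>i\<in>I. count \<tau> i) = MM B I"
  proof -
    have "MM B I \<in> (\<lambda>\<sigma>. \<Sum>i\<in>I. count \<sigma> i) ` B" by (rule Max_in) (use fB in auto)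
    then show ?thesis by (metis (no_types, lifting) imageE that)
  qed
  have st: "simplex n k \<tau>" using B t unfolding complex_def by auto
  have nt: "\<not> singular_simplex \<tau>" using nB t unfolding nonsingular_def by auto
  have "(\<Sum>i\<in>I. count \<tau> i) \<le> size \<tau>" by (rule sum_count_le[OF fI])
  hence "(\<Sum>i\<in>I. count \<tau> i) = size \<tau>" using tm ge st unfolding simplex_def by simp
  hence sub: "set_mset \<tau> \<subseteq> I" using sum_count_eq[OF fI] by blast
  have "card (set_mset \<tau>) = card I" using ns_card[OF nt] st cI unfolding simplex_def by simp
  hence "set_mset \<tau> = I" using sub fI by (simp add: card_subset_eq)
  hence "\<tau> = \<sigma>" using ns_mset_set[OF nt] ns_mset_set[OF ns] unfolding I_def by simp
  thus "\<sigma> \<in> B" using t by simp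
qed

theorem mainTheorem3:
  fixes n d k' :: nat and \<Delta> \<Delta>' :: "nat multiset set"
  assumes "n \<ge> 5"
    and "1 \<le> d" and "d \<le> n - 4"
    and "complex n (d - 1) \<Delta>" and "nonsingular \<Delta>"
    and "complex n k' \<Delta>'"
  shows "D n (d - 1) \<Delta> = D n k' \<Delta>' \<longleftrightarrow> \<Delta>' = \<Delta>"
proof
  assume eq: "D n (d - 1) \<Delta> = D n k' \<Delta>'"
  have kk: "k' = d - 1" using eq unfolding D_def by simp
  have hM: "\<forall>I. exc_index n I \<longrightarrow> MM \<Delta> I = MM \<Delta>' I"
  proof (intro allI impI)
    fix I assume "exc_index n I"
    then have "int (d - 1 + 1) - int (MM \<Delta> I) = int (k' + 1) - int (MM \<Delta>' I)"
      using fun_cong[OF arg_cong[OF eq, of snd], of I] unfolding D_def by simp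
    thus "MM \<Delta> I = MM \<Delta>' I" using kk by simp
  qed
  have C': "complex n (d - 1) \<Delta>'" using assms(6) kk by simp
  have f: "finite \<Delta>" "\<Delta> \<noteq> {}" "finite \<Delta>'" "\<Delta>' \<noteq> {}" using assms(4) C' unfolding complex_def by auto
  have ns': "nonsingular \<Delta>'"
    unfolding nonsingular_def
  proof
    fix \<tau> assume t: "\<tau> \<in> \<Delta>'"
    show "\<not> singular_simplex \<tau>"
    proof
      assume "singular_simplex \<tau>"
      then obtain i where ci: "count \<tau> i \<ge> 2" unfolding singular_simplex_def by auto
      hence "count \<tau> i > 0" by linarith
      hence "i \<in># \<tau>" by simp
      moreover have "set_mset \<tau> \<subseteq> {1..n-1}" using C' t unfolding complex_def simplex_def by auto
      ultimately have "i \<in> {1..n-1}" by blast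
      hence ex: "exc_index n {i}" using assms(1) unfolding exc_index_def by auto
      have "(\<Sum>j\<in>{i}. count \<tau> j) \<le> MM \<Delta>' {i}"
        by (rule Max_ge) (use t f in auto)
      hence "MM \<Delta>' {i} \<ge> 2" using ci by simp
      moreover have "MM \<Delta> {i} \<le> 1"
      proof -
        obtain \<sigma> where s: "\<sigma> \<in> \<Delta>" "(\<Sum>j\<in>{i}. count \<sigma> j) = MM \<Delta> {i}"
        proof -
          have "MM \<Delta> {i} \<in> (\<lambda>\<sigma>. \<Sum>j\<in>{i}. count \<sigma> j) ` \<Delta>" by (rule Max_in) (use f in auto)
          then show ?thesis by (metis (no_types, lifting) imageE that)
        qed
        have "\<not> singular_simplex \<sigma>" using assms(5) s unfolding nonsingular_def by auto
        hence "\<not> count \<sigma> i \<ge> 2" unfolding singular_simplex_def by blast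
        hence "count \<sigma> i \<le> 1" by linarith
        thus ?thesis using s by simp
      qed
      moreover have "MM \<Delta> {i} = MM \<Delta>' {i}" using hM ex by blast
      ultimately show False by linarith
    qed
  qed
  have kn: "d - 1 + 1 \<le> n - 4" using assms(2,3) by simp
  have "\<Delta> \<subseteq> \<Delta>'" by (rule incl[OF assms(4) C' assms(5) ns' kn hM])
  moreover have "\<Delta>' \<subseteq> \<Delta>" using hM by (intro incl[OF C' assms(4) ns' assms(5) kn]) simp
  ultimately show "\<Delta>' = \<Delta>" by blast
next
  assume e: "\<Delta>' = \<Delta>"
  obtain \<sigma> where s: "\<sigma> \<in> \<Delta>" using assms(4) unfolding complex_def by auto
  have "size \<sigma> = d - 1 + 1" "size \<sigma> = k' + 1" using s e assms(4,6) unfolding complex_def simplex_def by auto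
  hence "k' = d - 1" by simp
  thus "D n (d - 1) \<Delta> = D n k' \<Delta>'" using e by simp
qed

end
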